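(* Let $I$ be a nonempty set and let $A$ be a topologically independent subset of $(\mathbb{C}^\times)^I$. Then for every $i\in I$ the set $\{a\in A : |a(i)|\neq 1\}$ is finite.
   Context: $\mathbb{C}^\times$ is the multiplicative group of nonzero complex numbers with the Euclidean topology; $(\mathbb{C}^\times)^I$ carries the product topology and coordinatewise multiplication, with neutral element $e$ the constant function $1$. A subset $A$ of an abelian topological group $G$ (multiplicative notation, neutral element $e$) is topologically independent if $e\notin A$ and for every neighborhood $W$ of $e$ there is a neighborhood $U$ of $e$ such that for every finite $F\subseteq A$ and every family of integers $\{z_a: a\in F\}$, the condition $\prod_{a\in F}a^{z_a}\in U$ implies $a^{z_a}\in W$ for all $a\in F$. *)

theory Defs
  imports "HOL-Analysis.Analysis"
begin

text \<open>The group (C^x)^I, with I represented by the (nonempty) type 'i.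
  Its topology is the subspace topology of the product topology on 'i \<Rightarrow> complex
  (the open sets of 'i \<Rightarrow> complex are those of the product topology).\<close>

definition Cstar_pow :: "('i \<Rightarrow> complex) set" where
  "Cstar_pow = {f. \<forall>i. f i \<noteq> 0}"

definition unit_fun :: "'i \<Rightarrow> complex" where
  "unit_fun = (\<lambda>_. 1)"

definition nbhd_e :: "('i \<Rightarrow> complex) set \<Rightarrow> bool" where
  "nbhd_e W \<longleftrightarrow> W \<subseteq> Cstar_pow \<and>
     (\<exists>V. open V \<and> unit_fun \<in> V \<and> V \<inter> Cstar_pow \<subseteq> W)"

definition topo_indep :: "('i \<Rightarrow> complex) set \<Rightarrow> bool" where
  "topo_indep A \<longleftrightarrow> unit_fun \<notin> A \<and>
     (\<forall>W. nbhd_e W \<longrightarrow> (\<exists>U. nbhd_e U \<and>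
        (\<forall>F (z :: ('i \<Rightarrow> complex) \<Rightarrow> int). finite F \<and> F \<subseteq> A \<and>
            (\<lambda>i. \<Prod>a\<in>F. a i powi z a) \<in> U \<longrightarrow>
            (\<forall>a\<in>F. (\<lambda>i. a i powi z a) \<in> W))))"

end

theory Submission imports Defs begin

lemma lin_dep:
  fixes u :: "'k \<Rightarrow> 'j \<Rightarrow> real"
  assumes "finite J" "finite K" "card J < card K"
  shows "\<exists>c. (\<exists>k\<in>K. c k \<noteq> 0) \<and> (\<forall>j\<in>J. (\<Sum>k\<in>K. c k * u k j) = 0)"
  using assms
proof (induction J arbitrary: K u rule: finite_induct)
  case empty
  then have "K \<noteq> {}" by auto
  then show ?case by (rule_tac x="\<lambda>_. 1" in exI) auto
next
  case (insert j0 J)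
  show ?case
  proof (cases "\<forall>k\<in>K. u k j0 = 0")
    case True
    have "card J < card K" using insert by simp
    then obtain c where c: "\<exists>k\<in>K. c k \<noteq> 0" "\<forall>j\<in>J. (\<Sum>k\<in>K. c k * u k j) = 0"
      using insert.IH[OF insert.prems(1)] by blast
    then show ?thesis using True by (rule_tac x=c in exI) auto
  next
    case False
    then obtain k0 where k0: "k0 \<in> K" "u k0 j0 \<noteq> 0" by auto
    define K' where "K' = K - {k0}"
    define v where "v = (\<lambda>k j. u k j - u k j0 / u k0 j0 * u k0 j)"
    have fK': "finite K'" using insert K'_def by auto
    have "card K' = card K - 1" using k0 insert K'_def by auto
    then have "card J < card K'" using insert by simp
    then obtain c' where c': "\<exists>k\<in>K'. c' k \<noteq> 0" "\<forall>j\<in>J. (\<Sum>k\<in>K'. c' k * v k j) = 0"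
      using insert.IH[OF fK', of v] by blast
    define s where "s = (\<Sum>k\<in>K'. c' k * u k j0)"
    define c where "c = c'(k0 := - s / u k0 j0)"
    have k0K': "k0 \<notin> K'" using K'_def by auto
    have sumK: "(\<Sum>k\<in>K. c k * u k j) = c k0 * u k0 j + (\<Sum>k\<in>K'. c' k * u k j)" for j
    proof -
      have "(\<Sum>k\<in>K. c k * u k j) = c k0 * u k0 j + (\<Sum>k\<in>K'. c k * u k j)"
        using k0 insert.prems(1) K'_def by (simp add: sum.remove)
      moreover have "(\<Sum>k\<in>K'. c k * u k j) = (\<Sum>k\<in>K'. c' k * u k j)"
        using k0K' c_def by (intro sum.cong) auto
      ultimately show ?thesis by simp
    qed
    have "\<forall>j\<in>insert j0 J. (\<Sum>k\<in>K. c k * u k j) = 0"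
    proof
      fix j assume j: "j \<in> insert j0 J"
      show "(\<Sum>k\<in>K. c k * u k j) = 0"
      proof (cases "j = j0")
        case True
        then show ?thesis using sumK[of j0] k0 unfolding c_def s_def by simp
      next
        case False
        then have jJ: "j \<in> J" using j by auto
        have "(\<Sum>k\<in>K'. c' k * u k j) = (\<Sum>k\<in>K'. c' k * v k j + (c' k * u k j0) * (u k0 j / u k0 j0))"
          unfolding v_def by (intro sum.cong) (auto simp: algebra_simps)
        also have "\<dots> = (\<Sum>k\<in>K'. c' k * v k j) + s * (u k0 j / u k0 j0)"
          unfolding s_def by (simp add: sum.distrib sum_distrib_right sum_divide_distrib)
        also have "\<dots> = s * (u k0 j / u k0 j0)" using c'(2) jJ by simp
        finally show ?thesis using sumK[of j] k0 unfolding c_def by simp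
      qed
    qed
    moreover have "\<exists>k\<in>K. c k \<noteq> 0" using c'(1) k0K' K'_def c_def by auto
    ultimately show ?thesis by blast
  qed
qed

lemma box:
  fixes V :: "('i \<Rightarrow> complex) set"
  assumes "open V" "(\<lambda>_. 1) \<in> V"
  shows "\<exists>J e. finite J \<and> e > 0 \<and> (\<forall>f. (\<forall>j\<in>J. cmod (f j - 1) < e) \<longrightarrow> f \<in> V)"
proof -
  have "openin (product_topology (\<lambda>i. euclidean) UNIV) V" using assms(1) unfolding open_fun_def by auto
  from product_topology_open_contains_basis[OF this assms(2)]
  obtain X where H: "(\<lambda>_. 1) \<in> (\<Pi>\<^sub>E i\<in>UNIV. X i)" "\<And>i. open (X i)" "finite {i. X i \<noteq> UNIV}"
     "(\<Pi>\<^sub>E i\<in>UNIV. X i) \<subseteq> V" by auto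
  define J where "J = {i. X i \<noteq> UNIV}"
  have "\<forall>j. \<exists>e>0. ball 1 e \<subseteq> X j"
  proof
    fix j
    have "1 \<in> X j" using H(1) by (auto simp: PiE_iff)
    then show "\<exists>e>0. ball 1 e \<subseteq> X j" using H(2)[of j] open_contains_ball by blast
  qed
  then obtain e where e: "\<And>j. e j > 0" "\<And>j. ball 1 (e j) \<subseteq> X j" by metis
  define E where "E = (if J = {} then 1 else Min (e ` J))"
  have E: "E > 0" using e H(3) unfolding E_def J_def by auto
  have "f \<in> V" if f: "\<forall>j\<in>J. cmod (f j - 1) < E" for f
  proof -
    have "f j \<in> X j" for j
    proof (cases "j \<in> J")
      case True
      then have "E \<le> e j" using H(3) unfolding E_def J_def by auto
      then have "f j \<in> ball 1 (e j)" using f True by (auto simp: dist_norm norm_minus_commute)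
      then show ?thesis using e(2)[of j] by blast
    next
      case False then show ?thesis unfolding J_def by auto
    qed
    then show ?thesis using H(4) by auto
  qed
  then show ?thesis using E H(3) J_def by blast
qed

lemma sum_err:
  fixes x y :: "'a \<Rightarrow> real"
  assumes "finite K" "\<And>a. a \<in> K \<Longrightarrow> \<bar>x a\<bar> < 1 / real M" "M > 0"
  shows "\<bar>\<Sum>a\<in>K. x a * y a\<bar> \<le> (\<Sum>a\<in>K. \<bar>y a\<bar>) / real M"
proof -
  have "\<bar>\<Sum>a\<in>K. x a * y a\<bar> \<le> (\<Sum>a\<in>K. \<bar>x a * y a\<bar>)" by (rule sum_abs)
  also have "\<dots> \<le> (\<Sum>a\<in>K. \<bar>y a\<bar> / real M)"
  proof (rule sum_mono)
    fix a assume "a \<in> K"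
    then have "\<bar>x a\<bar> \<le> 1 / real M" using assms(2) by fastforce
    then have "\<bar>x a\<bar> * \<bar>y a\<bar> \<le> 1 / real M * \<bar>y a\<bar>" by (rule mult_right_mono) simp
    then show "\<bar>x a * y a\<bar> \<le> \<bar>y a\<bar> / real M" by (simp add: abs_mult)
  qed
  also have "\<dots> = (\<Sum>a\<in>K. \<bar>y a\<bar>) / real M" by (simp add: sum_divide_distrib)
  finally show ?thesis .
qed

theorem lemma2p5:
  fixes A :: "('i \<Rightarrow> complex) set"
  assumes "A \<subseteq> Cstar_pow"
    and "topo_indep A"
  shows "\<forall>i. finite {a \<in> A. cmod (a i) \<noteq> 1}"
proof (rule allI, rule ccontr)
  fix i
  define S where "S = {a \<in> A. cmod (a i) \<noteq> 1}"
  assume "infinite {a \<in> A. cmod (a i) \<noteq> 1}"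
  then have infS: "infinite S" unfolding S_def .
  have nz: "a j \<noteq> 0" if "a \<in> A" for a j using assms(1) that unfolding Cstar_pow_def by auto
  define W where "W = {f \<in> Cstar_pow. 1/2 < cmod (f i) \<and> cmod (f i) < 2}"
  define X where "X = (\<lambda>j. if j = i then {z::complex. 1/2 < cmod z \<and> cmod z < 2} else UNIV)"
  have "open {z::complex. 1/2 < cmod z \<and> cmod z < 2}"
    by (intro open_Collect_conj open_Collect_less continuous_intros)
  then have oX: "open (X j)" for j unfolding X_def by auto
  have "finite {j. X j \<noteq> UNIV}" unfolding X_def by (rule finite_subset[of _ "{i}"]) auto
  then have oV: "open (Pi\<^sub>E UNIV X)" using oX by (intro open_PiE) auto
  have "nbhd_e W" unfolding nbhd_e_def
  proof (intro conjI exI)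
    show "W \<subseteq> Cstar_pow" unfolding W_def by auto
    show "open (Pi\<^sub>E UNIV X)" by (rule oV)
    show "unit_fun \<in> Pi\<^sub>E UNIV X" unfolding unit_fun_def X_def by auto
    show "Pi\<^sub>E UNIV X \<inter> Cstar_pow \<subseteq> W"
    proof
      fix f assume f: "f \<in> Pi\<^sub>E UNIV X \<inter> Cstar_pow"
      then have "f i \<in> X i" by (auto simp: PiE_iff)
      then show "f \<in> W" using f unfolding W_def X_def by auto
    qed
  qed
  note nW = this
  have TI: "\<forall>W. nbhd_e W \<longrightarrow> (\<exists>U. nbhd_e U \<and>
        (\<forall>F (z :: ('i \<Rightarrow> complex) \<Rightarrow> int). finite F \<and> F \<subseteq> A \<and>
            (\<lambda>i. \<Prod>a\<in>F. a i powi z a) \<in> U \<longrightarrow>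
            (\<forall>a\<in>F. (\<lambda>i. a i powi z a) \<in> W)))"
    using assms(2) unfolding topo_indep_def by (rule conjunct2)
  obtain U where U: "nbhd_e U"
    and Uprop0: "\<forall>F (z :: ('i \<Rightarrow> complex) \<Rightarrow> int). finite F \<and> F \<subseteq> A \<and>
            (\<lambda>i. \<Prod>a\<in>F. a i powi z a) \<in> U \<longrightarrow>
            (\<forall>a\<in>F. (\<lambda>i. a i powi z a) \<in> W)"
    using TI[rule_format, OF nW] by (elim exE conjE)
  have Uprop: "\<forall>a\<in>F. (\<lambda>i. a i powi z a) \<in> W" if "finite F" "F \<subseteq> A" "(\<lambda>i. \<Prod>a\<in>F. a i powi z a) \<in> U"
    for F and z :: "('i \<Rightarrow> complex) \<Rightarrow> int"
    using Uprop0 that by blast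
  obtain V0 where V0: "open V0" "unit_fun \<in> V0" "V0 \<inter> Cstar_pow \<subseteq> U"
    using U unfolding nbhd_e_def by blast
  obtain J \<epsilon> where J: "finite J" "\<epsilon> > 0" and Jb: "\<And>f. (\<forall>j\<in>J. cmod (f j - 1) < \<epsilon>) \<Longrightarrow> f \<in> V0"
    using box[OF V0(1)] V0(2) unfolding unit_fun_def by blast
  obtain K where K: "finite K" "card K = card J + 1" "K \<subseteq> S"
    using infinite_arbitrarily_large[OF infS] by blast
  have KA: "K \<subseteq> A" using K S_def by auto
  define w where "w = (\<lambda>(a::'i \<Rightarrow> complex) j. Ln (a j))"
  have expw: "exp (w a j) = a j" if "a \<in> K" for a j using nz KA that unfolding w_def by (auto intro: exp_Ln)
  have Rew: "Re (w a j) = ln (cmod (a j))" if "a \<in> K" for a j using nz KA that unfolding w_def by (auto intro: Re_Ln)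
  obtain c0 where c0: "\<exists>a\<in>K. c0 a \<noteq> 0" "\<forall>j\<in>J. (\<Sum>a\<in>K. c0 a * Re (w a j)) = 0"
    using lin_dep[OF J(1) K(1), of "\<lambda>a j. Re (w a j)"] K(2) by auto
  then obtain a1 where a1: "a1 \<in> K" "c0 a1 \<noteq> 0" by blast
  define r where "r = Re (w a1 i)"
  have "cmod (a1 i) \<noteq> 1" "cmod (a1 i) > 0" using a1 K S_def nz KA by auto
  then have r0: "r \<noteq> 0" unfolding r_def using Rew[OF a1(1)] by simp
  define T where "T = ln 2 / \<bar>r\<bar> + 1"
  define c where "c = (\<lambda>a. c0 a * (T / \<bar>c0 a1\<bar>))"
  have cT: "\<bar>c a1\<bar> = T" using a1 r0 unfolding c_def T_def by (simp add: abs_mult)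
  have cdep: "(\<Sum>a\<in>K. c a * Re (w a j)) = 0" if "j \<in> J" for j
  proof -
    have "(\<Sum>a\<in>K. c a * Re (w a j)) = (T / \<bar>c0 a1\<bar>) * (\<Sum>a\<in>K. c0 a * Re (w a j))"
      unfolding c_def by (simp add: sum_distrib_left algebra_simps)
    then show ?thesis using c0(2) that by simp
  qed
  define t where "t = (\<lambda>j. (\<Sum>a\<in>K. c a * Im (w a j)) / (2 * pi))"
  obtain ek where ek: "bij_betw ek {0..<card K} K" using ex_bij_betw_nat_finite[OF K(1)] by blast
  obtain ej where ej: "bij_betw ej {0..<card J} J" using ex_bij_betw_nat_finite[OF J(1)] by blast
  define n1 where "n1 = card K"
  define \<Theta> where "\<Theta> = (\<lambda>idx. if idx < n1 then c (ek idx) else t (ej (idx - n1)))"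
  have "isCont exp (0::complex)" by (rule isCont_exp)
  then have "\<forall>e>0. \<exists>d>0. \<forall>x'::complex. dist x' 0 < d \<longrightarrow> dist (exp x') (exp 0) < e"
    unfolding continuous_at_eps_delta .
  then have "\<exists>\<delta>>0. \<forall>x'::complex. dist x' 0 < \<delta> \<longrightarrow> dist (exp x') (exp 0) < \<epsilon>"
    using J(2) by simp
  then obtain \<delta> where \<delta>0: "\<delta> > 0" and \<delta>1: "\<forall>x'::complex. dist x' 0 < \<delta> \<longrightarrow> dist (exp x') (exp 0) < \<epsilon>"
    by (elim exE conjE)
  note \<delta> = \<delta>0 \<delta>1[rule_format]
  define B where "B = (\<Sum>j\<in>J. (\<Sum>a\<in>K. \<bar>Re (w a j)\<bar> + \<bar>Im (w a j)\<bar>) + 2 * pi) + 1"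
  have "0 \<le> (\<Sum>j\<in>J. (\<Sum>a\<in>K. \<bar>Re (w a j)\<bar> + \<bar>Im (w a j)\<bar>) + 2 * pi)"
    by (intro sum_nonneg add_nonneg_nonneg) auto
  then have Bpos: "B > 0" unfolding B_def by linarith
  obtain M :: nat where M: "M > 0" "B / real M < \<delta>"
  proof -
    obtain M where M1: "B / \<delta> < real M" using reals_Archimedean2 by blast
    have "B / \<delta> > 0" using Bpos \<delta>(1) by simp
    then have Mp: "real M > 0" using M1 by linarith
    have "B < real M * \<delta>" using M1 \<delta>(1) by (simp add: divide_less_eq)
    then have "B / real M < \<delta>" using Mp by (simp add: divide_less_eq mult.commute)
    moreover have "M > 0" using Mp by simp
    ultimately show ?thesis using that by blast
  qed
  obtain q p where q: "0 < q" and qp: "\<And>idx. idx < n1 + card J \<Longrightarrow> \<bar>of_int q * \<Theta> idx - of_int (p idx)\<bar> < 1 / M"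
    using Dirichlet_approx_simult[OF M(1), where \<theta>=\<Theta> and n="n1 + card J"] by blast
  define z where "z = (\<lambda>a. p (inv_into {0..<n1} ek a))"
  define h where "h = (\<lambda>j. p (n1 + inv_into {0..<card J} ej j))"
  have zerr: "\<bar>of_int q * c a - of_int (z a)\<bar> < 1 / M" if "a \<in> K" for a
  proof -
    define idx where "idx = inv_into {0..<n1} ek a"
    have im: "a \<in> ek ` {0..<n1}" using ek that unfolding n1_def bij_betw_def by auto
    have "idx \<in> {0..<n1}" "ek idx = a" unfolding idx_def
      using inv_into_into[OF im] f_inv_into_f[OF im] by auto
    then have "idx < n1" "ek idx = a" by auto
    then show ?thesis using qp[of idx] unfolding \<Theta>_def z_def idx_def by simp
  qed
  have herr: "\<bar>of_int q * t j - of_int (h j)\<bar> < 1 / M" if "j \<in> J" for j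
  proof -
    define idx where "idx = inv_into {0..<card J} ej j"
    have im: "j \<in> ej ` {0..<card J}" using ej that unfolding bij_betw_def by auto
    have "idx \<in> {0..<card J}" "ej idx = j" unfolding idx_def
      using inv_into_into[OF im] f_inv_into_f[OF im] by auto
    then have "idx < card J" "ej idx = j" by auto
    then show ?thesis using qp[of "n1 + idx"] unfolding \<Theta>_def h_def idx_def by simp
  qed
  define P where "P = (\<lambda>j. \<Prod>a\<in>K. a j powi z a)"
  have powexp: "a j powi z a = exp (of_int (z a) * w a j)" if "a \<in> K" for a j
    using expw[OF that, of j] exp_power_int[of "w a j" "z a"] by simp
  have Pexp: "P j = exp (\<Sum>a\<in>K. of_int (z a) * w a j)" for j
    unfolding P_def using powexp K(1) by (simp add: exp_sum)
  have PC: "P \<in> Cstar_pow" unfolding Cstar_pow_def Pexp by simp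
  have PV: "P \<in> V0"
  proof (rule Jb, intro ballI)
    fix j assume j: "j \<in> J"
    define Y where "Y = (\<Sum>a\<in>K. of_int (z a) * w a j) + \<i> * (of_int (- h j) * (of_real pi * 2))"
    have PY: "P j = exp Y" unfolding Y_def Pexp by (rule exp_plus_2pin[symmetric])
    have ReY: "Re Y = (\<Sum>a\<in>K. (of_int (z a) - of_int q * c a) * Re (w a j))"
    proof -
      have "Re Y = (\<Sum>a\<in>K. of_int (z a) * Re (w a j))" unfolding Y_def by (simp add: Re_sum)
      also have "\<dots> = (\<Sum>a\<in>K. (of_int (z a) - of_int q * c a) * Re (w a j)) + of_int q * (\<Sum>a\<in>K. c a * Re (w a j))"
      proof -
        have "(\<Sum>a\<in>K. (of_int (z a) - of_int q * c a) * Re (w a j)) + of_int q * (\<Sum>a\<in>K. c a * Re (w a j))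
              = (\<Sum>a\<in>K. (of_int (z a) - of_int q * c a) * Re (w a j) + of_int q * (c a * Re (w a j)))"
          by (simp add: sum.distrib sum_distrib_left)
        also have "\<dots> = (\<Sum>a\<in>K. of_int (z a) * Re (w a j))" by (rule sum.cong) (auto simp: algebra_simps)
        finally show ?thesis by simp
      qed
      finally show ?thesis using cdep[OF j] by simp
    qed
    have ImY: "Im Y = (\<Sum>a\<in>K. (of_int (z a) - of_int q * c a) * Im (w a j)) + 2 * pi * (of_int q * t j - of_int (h j))"
    proof -
      have "Im Y = (\<Sum>a\<in>K. of_int (z a) * Im (w a j)) - 2 * pi * of_int (h j)" unfolding Y_def by (simp add: Im_sum)
      also have "(\<Sum>a\<in>K. of_int (z a) * Im (w a j)) = (\<Sum>a\<in>K. (of_int (z a) - of_int q * c a) * Im (w a j)) + 2 * pi * (of_int q * t j)"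
      proof -
        have tq: "2 * pi * (of_int q * t j) = of_int q * (\<Sum>a\<in>K. c a * Im (w a j))"
          unfolding t_def by simp
        have "(\<Sum>a\<in>K. (of_int (z a) - of_int q * c a) * Im (w a j)) + of_int q * (\<Sum>a\<in>K. c a * Im (w a j))
              = (\<Sum>a\<in>K. (of_int (z a) - of_int q * c a) * Im (w a j) + of_int q * (c a * Im (w a j)))"
          by (simp add: sum.distrib sum_distrib_left)
        also have "\<dots> = (\<Sum>a\<in>K. of_int (z a) * Im (w a j))" by (rule sum.cong) (auto simp: algebra_simps)
        finally show ?thesis using tq by linarith
      qed
      finally show ?thesis by (simp add: algebra_simps)
    qed
    have e1: "\<bar>of_int (z a) - of_int q * c a\<bar> < 1 / real M" if "a \<in> K" for a
      using zerr[OF that] by (simp add: abs_minus_commute)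
    have "\<bar>Re Y\<bar> \<le> (\<Sum>a\<in>K. \<bar>Re (w a j)\<bar>) / real M"
      unfolding ReY by (rule sum_err[OF K(1) e1 M(1)])
    moreover have "\<bar>Im Y\<bar> \<le> (\<Sum>a\<in>K. \<bar>Im (w a j)\<bar>) / real M + 2 * pi / real M"
    proof -
      have "\<bar>Im Y\<bar> \<le> \<bar>\<Sum>a\<in>K. (of_int (z a) - of_int q * c a) * Im (w a j)\<bar> + \<bar>2 * pi * (of_int q * t j - of_int (h j))\<bar>"
        unfolding ImY by (rule abs_triangle_ineq)
      moreover have "\<bar>\<Sum>a\<in>K. (of_int (z a) - of_int q * c a) * Im (w a j)\<bar> \<le> (\<Sum>a\<in>K. \<bar>Im (w a j)\<bar>) / real M"
        by (rule sum_err[OF K(1) e1 M(1)])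
      moreover have "\<bar>2 * pi * (of_int q * t j - of_int (h j))\<bar> \<le> 2 * pi / real M"
      proof -
        have "\<bar>of_int q * t j - of_int (h j)\<bar> \<le> 1 / real M" using herr[OF j] by simp
        then have "2 * pi * \<bar>of_int q * t j - of_int (h j)\<bar> \<le> 2 * pi * (1 / real M)"
          by (rule mult_left_mono) simp
        then show ?thesis by (simp add: abs_mult)
      qed
      ultimately show ?thesis by linarith
    qed
    ultimately have "cmod Y \<le> ((\<Sum>a\<in>K. \<bar>Re (w a j)\<bar> + \<bar>Im (w a j)\<bar>) + 2 * pi) / real M"
      using cmod_le[of Y] by (simp add: sum.distrib add_divide_distrib)
    also have "\<dots> \<le> B / real M"
    proof (rule divide_right_mono)
      have "(\<Sum>a\<in>K. \<bar>Re (w a j)\<bar> + \<bar>Im (w a j)\<bar>) + 2 * pi \<le> (\<Sum>j\<in>J. (\<Sum>a\<in>K. \<bar>Re (w a j)\<bar> + \<bar>Im (w a j)\<bar>) + 2 * pi)"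
      proof (rule member_le_sum[OF j _ J(1)])
        fix x assume "x \<in> J - {j}"
        have "0 \<le> (\<Sum>a\<in>K. \<bar>Re (w a x)\<bar> + \<bar>Im (w a x)\<bar>)" by (intro sum_nonneg) auto
        then show "0 \<le> (\<Sum>a\<in>K. \<bar>Re (w a x)\<bar> + \<bar>Im (w a x)\<bar>) + 2 * pi" using pi_gt_zero by linarith
      qed
      then show "(\<Sum>a\<in>K. \<bar>Re (w a j)\<bar> + \<bar>Im (w a j)\<bar>) + 2 * pi \<le> B" unfolding B_def by linarith
    qed simp
    also have "\<dots> < \<delta>" by (rule M(2))
    finally have "dist (exp Y) (exp 0) < \<epsilon>" using \<delta>(2)[of Y] by simp
    then show "cmod (P j - 1) < \<epsilon>" using PY by (simp add: dist_norm)
  qed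
  have "P \<in> U" using PV PC V0(3) by blast
  then have "\<forall>a\<in>K. (\<lambda>i. a i powi z a) \<in> W" using Uprop[OF K(1) KA] unfolding P_def by blast
  then have inW: "1/2 < cmod (a1 i powi z a1) \<and> cmod (a1 i powi z a1) < 2" using a1(1) unfolding W_def by auto
  have modeq: "cmod (a1 i powi z a1) = exp (of_int (z a1) * r)"
    using powexp[OF a1(1), of i] unfolding r_def by (simp add: norm_exp_eq_Re)
  have ln2: "ln (2::real) > 0" by simp
  have Tpos: "T \<ge> 0" unfolding T_def using ln2 by (simp add: add_nonneg_nonneg)
  have q1: "(1::real) \<le> of_int q" using q by simp
  have "T \<le> of_int q * T" using mult_right_mono[OF q1 Tpos] by simp
  also have "\<dots> = \<bar>of_int q * c a1\<bar>" using q cT by (simp add: abs_mult)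
  finally have qc: "T \<le> \<bar>of_int q * c a1\<bar>" .
  have M1: "1 / real M \<le> 1" using M(1) by simp
  have "\<bar>of_int q * c a1\<bar> \<le> \<bar>of_int q * c a1 - of_int (z a1)\<bar> + \<bar>real_of_int (z a1)\<bar>" by arith
  then have zT: "\<bar>real_of_int (z a1)\<bar> \<ge> T - 1"
    using zerr[OF a1(1)] qc M1 by linarith
  have "T - 1 = ln 2 / \<bar>r\<bar>" unfolding T_def by simp
  then have "ln 2 / \<bar>r\<bar> * \<bar>r\<bar> \<le> \<bar>real_of_int (z a1)\<bar> * \<bar>r\<bar>" using zT by (intro mult_right_mono) auto
  then have zr: "\<bar>of_int (z a1) * r\<bar> \<ge> ln 2" using r0 by (simp add: abs_mult)
  show False
  proof (cases "of_int (z a1) * r \<ge> 0")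
    case True
    then have "ln 2 \<le> of_int (z a1) * r" using zr by simp
    then have "exp (ln 2) \<le> exp (of_int (z a1) * r)" by (rule exp_mono)
    then show False using inW modeq by simp
  next
    case False
    then have "of_int (z a1) * r \<le> - ln 2" using zr by simp
    then have "exp (of_int (z a1) * r) \<le> exp (- ln 2)" by (rule exp_mono)
    then have "exp (of_int (z a1) * r) \<le> 1/2" by (simp add: exp_minus)
    then show False using inW modeq by simp
  qed
qed

end
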